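(* Let $R$ be a commutative ring, $S$ a subring of $R$, $I$ an ideal of $S$, $n\ge1$ and $f\in(T_n(R))[x]$. [Right] Let $1\le i\le n$. The following are equivalent: (1) for every $C\in T_n(S)$ all entries of the $i$-th row of $f(C)$ lie in $I$; (2) for all $C\in T_n(S)$ and all $h,j$ with $i\le h\le j\le n$, $[f_{ih}(C)]_{hj}\in I$; (3) for all $h,j$ with $i\le h\le j\le n$, $\langle f_{ih},p_{hj}\rangle\in\mathrm{Int}(S^{\ast},I)$; (4) $f_{ih}\in\mathrm{Int}_R(T_{n-h+1}(S),T_{n-h+1}(I))$ for $h=i,\dots,n$. [Left] Let $1\le j\le n$. The following are equivalent: (1) for every $C\in T_n(S)$ all entries of the $j$-th column of $f(C)_\ell$ lie in $I$; (2) for all $C\in T_n(S)$ and all $i,h$ with $1\le i\le h\le j$, $[f_{hj}(C)]_{ih}\in I$; (3) for all $i,h$ with $1\le i\le h\le j$, $\langle f_{hj},p_{ih}\rangle\in\mathrm{Int}(S^{\ast},I)$; (4) $f_{hj}\in\mathrm{Int}_R(T_h(S),T_h(I))$ for $h=1,\dots,j$.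
   Context: $\mathbb{N}=\{1,2,3,\dots\}$. $T_n(A)$ denotes the ring of upper triangular $n\times n$ matrices over a ring $A$, and $[M]_{ij}$ the $(i,j)$-entry of a matrix $M$. For $f=\sum_k F_kx^k\in(T_n(R))[x]$ with $F_k\in T_n(R)$, right substitution is $f(C)=\sum_kF_kC^k$ and left substitution is $f(C)_\ell=\sum_kC^kF_k$. Writing $f_{ij}^{(k)}=[F_k]_{ij}$, set $f_{ij}=\sum_k f_{ij}^{(k)}x^k\in R[x]$. For $g\in R[x]$, $g(C)$ is the usual evaluation at a matrix, and $\mathrm{Int}_R(T_m(S),T_m(I))=\{g\in R[x]\mid \forall C\in T_m(S):\ g(C)\in T_m(I)\}$. Let $R[X]=R[\{x_{ab}\mid a,b\in\mathbb{N}\}]$. Path polynomials: for $1\le i\le j$ and $k>0$, $p_{ij}^{(k)}=\sum_{i=i_1\le i_2\le\dots\le i_{k+1}=j} x_{i_1i_2}\cdots x_{i_ki_{k+1}}$; for $1\le i\le j$, $p_{ij}^{(0)}=\delta_{ij}$; for $i>j$, $p_{ij}^{(k)}=0$. For $g=\sum_kg_kx^k\in R[x]$, $\langle g,p_{ij}\rangle=\sum_k g_kp_{ij}^{(k)}\in R[X]$. $\mathrm{Int}(S^{\ast},I)$ denotes the set of polynomials in $R[X]$ that take values in $I$ whenever elements of $S$ are substituted (independently) for all the variables. *)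

theory Defs
  imports "HOL-Computational_Algebra.Polynomial"
begin

text \<open>Matrices of size n are functions nat => nat => 'a, indices 1..n, entries
  outside the range {1..n} x {1..n} are 0 by convention.\<close>

definition mat_one :: "nat \<Rightarrow> nat \<Rightarrow> nat \<Rightarrow> 'a::comm_ring_1" where
  "mat_one n i j = (if i = j \<and> 1 \<le> i \<and> i \<le> n then 1 else 0)"

definition mat_mult :: "nat \<Rightarrow> (nat \<Rightarrow> nat \<Rightarrow> 'a::comm_ring_1) \<Rightarrow> (nat \<Rightarrow> nat \<Rightarrow> 'a) \<Rightarrow> nat \<Rightarrow> nat \<Rightarrow> 'a" where
  "mat_mult n A B i j = (\<Sum>k\<in>{1..n}. A i k * B k j)"

primrec mat_pow :: "nat \<Rightarrow> (nat \<Rightarrow> nat \<Rightarrow> 'a::comm_ring_1) \<Rightarrow> nat \<Rightarrow> nat \<Rightarrow> nat \<Rightarrow> 'a" where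
  "mat_pow n C 0 = mat_one n"
| "mat_pow n C (Suc k) = mat_mult n (mat_pow n C k) C"

definition in_T :: "nat \<Rightarrow> 'a::comm_ring_1 set \<Rightarrow> (nat \<Rightarrow> nat \<Rightarrow> 'a) \<Rightarrow> bool" where
  "in_T n A C \<longleftrightarrow> (\<forall>i j. (1 \<le> i \<and> i \<le> j \<and> j \<le> n \<longrightarrow> C i j \<in> A) \<and>
                        (\<not> (1 \<le> i \<and> i \<le> j \<and> j \<le> n) \<longrightarrow> C i j = 0))"

definition poly_mat :: "nat \<Rightarrow> 'a::comm_ring_1 poly \<Rightarrow> (nat \<Rightarrow> nat \<Rightarrow> 'a) \<Rightarrow> nat \<Rightarrow> nat \<Rightarrow> 'a" where
  "poly_mat m g C a b = (\<Sum>k\<le>degree g. coeff g k * mat_pow m C k a b)"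

text \<open>A polynomial f = sum_k F_k x^k in (T_n(R))[x] is given by its entry polynomials
  f i j = sum_k [F_k]_ij x^k.  It lies in (T_n(R))[x] iff f i j = 0 unless 1 <= i <= j <= n.\<close>
definition is_Tpoly :: "nat \<Rightarrow> (nat \<Rightarrow> nat \<Rightarrow> 'a::comm_ring_1 poly) \<Rightarrow> bool" where
  "is_Tpoly n f \<longleftrightarrow> (\<forall>i j. \<not> (1 \<le> i \<and> i \<le> j \<and> j \<le> n) \<longrightarrow> f i j = 0)"

definition deg_bound :: "nat \<Rightarrow> (nat \<Rightarrow> nat \<Rightarrow> 'a::comm_ring_1 poly) \<Rightarrow> nat" where
  "deg_bound n f = (\<Sum>a\<in>{1..n}. \<Sum>b\<in>{1..n}. degree (f a b))"

text \<open>Right substitution f(C) = sum_k F_k C^k.\<close>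
definition right_eval :: "nat \<Rightarrow> (nat \<Rightarrow> nat \<Rightarrow> 'a::comm_ring_1 poly) \<Rightarrow> (nat \<Rightarrow> nat \<Rightarrow> 'a) \<Rightarrow> nat \<Rightarrow> nat \<Rightarrow> 'a" where
  "right_eval n f C i j = (\<Sum>k\<le>deg_bound n f. \<Sum>h\<in>{1..n}. coeff (f i h) k * mat_pow n C k h j)"

text \<open>Left substitution f(C)_l = sum_k C^k F_k.\<close>
definition left_eval :: "nat \<Rightarrow> (nat \<Rightarrow> nat \<Rightarrow> 'a::comm_ring_1 poly) \<Rightarrow> (nat \<Rightarrow> nat \<Rightarrow> 'a) \<Rightarrow> nat \<Rightarrow> nat \<Rightarrow> 'a" where
  "left_eval n f C i j = (\<Sum>k\<le>deg_bound n f. \<Sum>h\<in>{1..n}. mat_pow n C k i h * coeff (f h j) k)"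

definition Int_T :: "nat \<Rightarrow> 'a::comm_ring_1 set \<Rightarrow> 'a set \<Rightarrow> 'a poly set" where
  "Int_T m S I = {g. \<forall>C. in_T m S C \<longrightarrow> in_T m I (poly_mat m g C)}"

text \<open>Value of the path polynomial p_ij^(k) under the assignment x_ab := sigma (a,b):
  sum over i = i_1 <= i_2 <= ... <= i_(k+1) = j of the products.\<close>
fun path_val :: "(nat \<times> nat \<Rightarrow> 'a::comm_ring_1) \<Rightarrow> nat \<Rightarrow> nat \<Rightarrow> nat \<Rightarrow> 'a" where
  "path_val \<sigma> i j 0 = (if i = j then 1 else 0)"
| "path_val \<sigma> i j (Suc k) = (\<Sum>l\<in>{i..j}. \<sigma> (i, l) * path_val \<sigma> l j k)"

text \<open>The polynomial <g, p_ij> in R[X], represented by its evaluation function.\<close>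
definition pair_path :: "'a::comm_ring_1 poly \<Rightarrow> nat \<Rightarrow> nat \<Rightarrow> (nat \<times> nat \<Rightarrow> 'a) \<Rightarrow> 'a" where
  "pair_path g i j \<sigma> = (\<Sum>k\<le>degree g. coeff g k * path_val \<sigma> i j k)"

definition Int_star :: "'a set \<Rightarrow> 'a set \<Rightarrow> ((nat \<times> nat \<Rightarrow> 'a) \<Rightarrow> 'a) \<Rightarrow> bool" where
  "Int_star S I P \<longleftrightarrow> (\<forall>\<sigma>. (\<forall>a b. \<sigma> (a, b) \<in> S) \<longrightarrow> P \<sigma> \<in> I)"

definition is_subring :: "'a::comm_ring_1 set \<Rightarrow> bool" where
  "is_subring S \<longleftrightarrow> 0 \<in> S \<and> 1 \<in> S \<and> (\<forall>a\<in>S. \<forall>b\<in>S. a + b \<in> S \<and> a - b \<in> S \<and> a * b \<in> S)"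

definition is_ideal_of :: "'a::comm_ring_1 set \<Rightarrow> 'a set \<Rightarrow> bool" where
  "is_ideal_of I S \<longleftrightarrow> I \<subseteq> S \<and> 0 \<in> I \<and> (\<forall>a\<in>I. \<forall>b\<in>I. a + b \<in> I \<and> a - b \<in> I)
      \<and> (\<forall>s\<in>S. \<forall>a\<in>I. s * a \<in> I)"

end

theory Submission
  imports Defs
begin



lemma path_val_cong:
  "(\<forall>x y. a \<le> x \<and> x \<le> y \<and> y \<le> b \<longrightarrow> \<sigma> (x,y) = \<tau> (x,y)) \<Longrightarrow> path_val \<sigma> a b k = path_val \<tau> a b k"
proof (induction k arbitrary: a)
  case 0 then show ?case by simp
next
  case (Suc k)
  show ?case unfolding path_val.simps
  proof (rule sum.cong[OF refl])
    fix l assume l: "l \<in> {a..b}"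
    have "\<sigma> (a,l) = \<tau> (a,l)" using Suc.prems l by auto
    moreover have "path_val \<sigma> l b k = path_val \<tau> l b k"
      using Suc.prems l by (intro Suc.IH) auto
    ultimately show "\<sigma> (a, l) * path_val \<sigma> l b k = \<tau> (a, l) * path_val \<tau> l b k" by simp
  qed
qed

lemma path_val_zero: "b < a \<Longrightarrow> path_val \<sigma> a b k = 0"
  by (cases k) auto

lemma path_val_shift:
  "path_val (\<lambda>(x,y). \<sigma> (x+c,y+c)) a b k = path_val \<sigma> (a+c) (b+c) k"
proof (induction k arbitrary: a)
  case 0 then show ?case by simp
next
  case (Suc k)
  have "path_val \<sigma> (a+c) (b+c) (Suc k) = (\<Sum>l\<in>{a..b}. \<sigma> (a+c, l+c) * path_val \<sigma> (l+c) (b+c) k)"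
    by (simp add: sum.shift_bounds_cl_nat_ivl)
  then show ?case using Suc.IH by simp
qed

lemma pair_path_shift:
  "pair_path g a b (\<lambda>(x,y). \<sigma> (x+c,y+c)) = pair_path g (a+c) (b+c) \<sigma>"
  unfolding pair_path_def by (simp only: path_val_shift)

lemma shift_iff:
  "Int_star S I (pair_path g a b) \<longleftrightarrow> Int_star S I (pair_path g (a+c) (b+c))"
proof
  assume H: "Int_star S I (pair_path g a b)"
  show "Int_star S I (pair_path g (a+c) (b+c))" unfolding Int_star_def
  proof (intro allI impI)
    fix \<sigma> :: "nat\<times>nat \<Rightarrow> 'a" assume "\<forall>x y. \<sigma> (x,y) \<in> S"
    then have "pair_path g a b (\<lambda>(x,y). \<sigma> (x+c,y+c)) \<in> I" using H unfolding Int_star_def by auto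
    then show "pair_path g (a+c) (b+c) \<sigma> \<in> I" by (simp add: pair_path_shift)
  qed
next
  assume H: "Int_star S I (pair_path g (a+c) (b+c))"
  show "Int_star S I (pair_path g a b)" unfolding Int_star_def
  proof (intro allI impI)
    fix \<sigma> :: "nat\<times>nat \<Rightarrow> 'a" assume "\<forall>x y. \<sigma> (x,y) \<in> S"
    then have "pair_path g (a+c) (b+c) (\<lambda>(x,y). \<sigma> (x-c,y-c)) \<in> I" using H unfolding Int_star_def by auto
    then have "pair_path g a b (\<lambda>(x,y). (\<lambda>(x,y). \<sigma> (x-c,y-c)) (x+c,y+c)) \<in> I"
      by (simp only: pair_path_shift)
    then show "pair_path g a b \<sigma> \<in> I" by simp
  qed
qed

lemma mat_mult_assoc:
  "mat_mult n (mat_mult n A B) D = mat_mult n A (mat_mult n B D)"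
  unfolding mat_mult_def
  apply (rule ext, rule ext)
  apply (simp add: sum_distrib_left sum_distrib_right mult.assoc)
  by (rule sum.swap)

lemma mat_one_left: "mat_mult n (mat_one n) C a b = (if a \<in> {1..n} then C a b else 0)"
proof -
  have "\<And>k. mat_one n a k * C k b = (if k = a then (if a \<in> {1..n} then C a b else 0) else 0)"
    by (auto simp: mat_one_def)
  then show ?thesis unfolding mat_mult_def by (simp add: sum.delta')
qed

lemma mat_one_right: "mat_mult n C (mat_one n) a b = (if b \<in> {1..n} then C a b else 0)"
proof -
  have "\<And>k. C a k * mat_one n k b = (if k = b then (if b \<in> {1..n} then C a b else 0) else 0)"
    by (auto simp: mat_one_def)
  then show ?thesis unfolding mat_mult_def by (simp add: sum.delta')
qed

lemma mat_pow_Suc':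
  assumes "\<forall>a b. \<not>(1\<le>a \<and> a\<le>n \<and> 1 \<le> b \<and> b \<le> n) \<longrightarrow> C a b = 0"
  shows "mat_pow n C (Suc k) = mat_mult n C (mat_pow n C k)"
proof (induction k)
  case 0
  show ?case using assms by (auto intro!: ext simp: mat_one_left mat_one_right)
next
  case (Suc k)
  have "mat_pow n C (Suc (Suc k)) = mat_mult n (mat_pow n C (Suc k)) C" by simp
  also have "\<dots> = mat_mult n C (mat_mult n (mat_pow n C k) C)" using Suc by (simp add: mat_mult_assoc)
  finally show ?case by simp
qed

lemma in_T_out: "in_T n A C \<Longrightarrow> \<not>(1 \<le> a \<and> a \<le> b \<and> b \<le> n) \<Longrightarrow> C a b = 0"
  unfolding in_T_def by blast

lemma in_T_out2: "in_T n A C \<Longrightarrow> \<forall>a b. \<not>(1\<le>a \<and> a\<le>n \<and> 1 \<le> b \<and> b \<le> n) \<longrightarrow> C a b = 0"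
  unfolding in_T_def by auto

lemma mat_pow_path:
  assumes T: "in_T n A C"
  shows "1 \<le> a \<Longrightarrow> b \<le> n \<Longrightarrow> mat_pow n C k a b = path_val (\<lambda>(x,y). C x y) a b k"
proof (induction k arbitrary: a)
  case 0 then show ?case by (simp add: mat_one_def)
next
  case (Suc k)
  have "mat_pow n C (Suc k) a b = (\<Sum>l\<in>{1..n}. C a l * mat_pow n C k l b)"
    by (simp only: mat_pow_Suc'[OF in_T_out2[OF T]] mat_mult_def)
  also have "\<dots> = (\<Sum>l\<in>{1..n}. C a l * path_val (\<lambda>(x,y). C x y) l b k)"
    using Suc by (intro sum.cong) auto
  also have "\<dots> = (\<Sum>l\<in>{a..b}. C a l * path_val (\<lambda>(x,y). C x y) l b k)"
  proof (rule sum.mono_neutral_right)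
    show "{a..b} \<subseteq> {1..n}" using Suc by auto
    show "\<forall>l\<in>{1..n} - {a..b}. C a l * path_val (\<lambda>(x,y). C x y) l b k = 0"
    proof
      fix l assume l: "l \<in> {1..n} - {a..b}"
      show "C a l * path_val (\<lambda>(x,y). C x y) l b k = 0"
      proof (cases "l < a")
        case True then show ?thesis using in_T_out[OF T, of a l] by simp
      next
        case False then have "b < l" using l by auto
        then show ?thesis by (simp add: path_val_zero)
      qed
    qed
  qed simp
  finally show ?case by simp
qed

lemma mat_pow_out: "in_T m A C \<Longrightarrow> \<not>(1\<le>a \<and> a\<le>b \<and> b\<le>m) \<Longrightarrow> mat_pow m C k a b = 0"
proof (induction k arbitrary: b)
  case 0 then show ?case by (auto simp: mat_one_def)
next
  case (Suc k)
  have "\<And>l. mat_pow m C k a l * C l b = 0"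
  proof -
    fix l show "mat_pow m C k a l * C l b = 0"
    proof (cases "1\<le>a \<and> a\<le>l \<and> l\<le>m")
      case True
      then have "\<not>(1 \<le> l \<and> l \<le> b \<and> b \<le> m)" using Suc.prems by auto
      then show ?thesis using in_T_out[OF Suc.prems(1)] by simp
    next
      case False then show ?thesis using Suc.IH[OF Suc.prems(1)] by simp
    qed
  qed
  then show ?case by (simp add: mat_mult_def)
qed

lemma poly_mat_path: "in_T n A C \<Longrightarrow> 1 \<le> a \<Longrightarrow> b \<le> n \<Longrightarrow>
   poly_mat n g C a b = pair_path g a b (\<lambda>(x,y). C x y)"
  unfolding poly_mat_def pair_path_def by (simp add: mat_pow_path)

lemma poly_mat_out: "in_T m A C \<Longrightarrow> \<not>(1\<le>a \<and> a\<le>b \<and> b\<le>m) \<Longrightarrow> poly_mat m g C a b = 0"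
  unfolding poly_mat_def by (simp add: mat_pow_out)

lemma poly_mat_0[simp]: "poly_mat n 0 C a b = 0"
  unfolding poly_mat_def by simp

lemma poly_mat_bound: "degree g \<le> D \<Longrightarrow> poly_mat m g C a b = (\<Sum>k\<le>D. coeff g k * mat_pow m C k a b)"
  unfolding poly_mat_def
  by (rule sum.mono_neutral_left) (auto simp: coeff_eq_0)

lemma sum_in_I: assumes "is_ideal_of I S" shows "finite A \<Longrightarrow> (\<forall>x\<in>A. g x \<in> I) \<Longrightarrow> sum g A \<in> I"
proof (induction A rule: finite_induct)
  case empty then show ?case using assms by (simp add: is_ideal_of_def)
next
  case (insert x F) then show ?case using assms by (simp add: is_ideal_of_def)
qed

lemma gen_iff:
  assumes S: "is_subring S" and I: "is_ideal_of I S" and ab: "1 \<le> a" "a \<le> b" "b \<le> n"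
  shows "(\<forall>C. in_T n S C \<longrightarrow> poly_mat n g C a b \<in> I) \<longleftrightarrow> Int_star S I (pair_path g a b)"
proof
  assume H: "\<forall>C. in_T n S C \<longrightarrow> poly_mat n g C a b \<in> I"
  show "Int_star S I (pair_path g a b)" unfolding Int_star_def
  proof (intro allI impI)
    fix \<sigma> :: "nat \<times> nat \<Rightarrow> 'a" assume \<sigma>: "\<forall>x y. \<sigma> (x,y) \<in> S"
    define C where "C = (\<lambda>x y. if 1 \<le> x \<and> x \<le> y \<and> y \<le> n then \<sigma> (x,y) else 0)"
    have T: "in_T n S C" using \<sigma> unfolding in_T_def C_def by auto
    have "pair_path g a b \<sigma> = pair_path g a b (\<lambda>(x,y). C x y)"
      unfolding pair_path_def using ab
      by (intro sum.cong refl arg_cong2[where f="(*)"] path_val_cong) (auto simp: C_def)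
    also have "\<dots> = poly_mat n g C a b" using poly_mat_path[OF T] ab by simp
    finally show "pair_path g a b \<sigma> \<in> I" using H T by simp
  qed
next
  assume H: "Int_star S I (pair_path g a b)"
  show "\<forall>C. in_T n S C \<longrightarrow> poly_mat n g C a b \<in> I"
  proof (intro allI impI)
    fix C assume T: "in_T n S C"
    have "\<forall>x y. (\<lambda>(x,y). C x y) (x,y) \<in> S"
    proof (intro allI)
      fix x y show "(\<lambda>(x,y). C x y) (x,y) \<in> S"
        using T S unfolding in_T_def is_subring_def by (cases "1\<le>x \<and> x\<le>y \<and> y\<le>n") auto
    qed
    then have "pair_path g a b (\<lambda>(x,y). C x y) \<in> I" using H unfolding Int_star_def by blast
    then show "poly_mat n g C a b \<in> I" using poly_mat_path[OF T] ab by simp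
  qed
qed

lemma Int_T_iff:
  assumes S: "is_subring S" and I: "is_ideal_of I S"
  shows "g \<in> Int_T m S I \<longleftrightarrow> (\<forall>a b. 1\<le>a \<and> a\<le>b \<and> b\<le>m \<longrightarrow> Int_star S I (pair_path g a b))"
proof -
  have "g \<in> Int_T m S I \<longleftrightarrow> (\<forall>C. in_T m S C \<longrightarrow> (\<forall>a b. 1\<le>a \<and> a\<le>b \<and> b\<le>m \<longrightarrow> poly_mat m g C a b \<in> I))"
    unfolding Int_T_def in_T_def using poly_mat_out[of m S] I unfolding is_ideal_of_def
    by (auto simp: in_T_def) 
  also have "\<dots> \<longleftrightarrow> (\<forall>a b. 1\<le>a \<and> a\<le>b \<and> b\<le>m \<longrightarrow> (\<forall>C. in_T m S C \<longrightarrow> poly_mat m g C a b \<in> I))"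
    by blast
  also have "\<dots> \<longleftrightarrow> (\<forall>a b. 1\<le>a \<and> a\<le>b \<and> b\<le>m \<longrightarrow> Int_star S I (pair_path g a b))"
    using gen_iff[OF S I] by blast
  finally show ?thesis .
qed

lemma deg_le_bound: "is_Tpoly n f \<Longrightarrow> degree (f a b) \<le> deg_bound n f"
proof (cases "a \<in> {1..n} \<and> b \<in> {1..n}")
  case True
  have "degree (f a b) \<le> (\<Sum>b'\<in>{1..n}. degree (f a b'))"
    using True by (intro member_le_sum) auto
  also have "\<dots> \<le> deg_bound n f" unfolding deg_bound_def
    using True by (intro member_le_sum[where f="\<lambda>a. \<Sum>b\<in>{1..n}. degree (f a b)"]) auto
  finally show ?thesis .
next
  case False
  assume "is_Tpoly n f"
  then have "f a b = 0" using False unfolding is_Tpoly_def by auto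
  then show ?thesis by simp
qed

lemma RE: "is_Tpoly n f \<Longrightarrow> right_eval n f C i j = (\<Sum>h\<in>{1..n}. poly_mat n (f i h) C h j)"
  unfolding right_eval_def
  by (subst sum.swap) (simp add: poly_mat_bound[OF deg_le_bound])

lemma LE: "is_Tpoly n f \<Longrightarrow> left_eval n f C i j = (\<Sum>h\<in>{1..n}. poly_mat n (f h j) C i h)"
  unfolding left_eval_def
  by (subst sum.swap) (simp add: poly_mat_bound[OF deg_le_bound] mult.commute)

definition Cr :: "nat \<Rightarrow> (nat \<Rightarrow> nat \<Rightarrow> 'a::comm_ring_1) \<Rightarrow> nat \<Rightarrow> nat \<Rightarrow> 'a" where
  "Cr h C = (\<lambda>a b. if h \<le> a then C a b else 0)"

definition Cl :: "nat \<Rightarrow> (nat \<Rightarrow> nat \<Rightarrow> 'a::comm_ring_1) \<Rightarrow> nat \<Rightarrow> nat \<Rightarrow> 'a" where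
  "Cl h C = (\<lambda>a b. if b \<le> h then C a b else 0)"

lemma in_T_Cr: "0 \<in> A \<Longrightarrow> in_T n A C \<Longrightarrow> in_T n A (Cr h C)"
  unfolding in_T_def Cr_def by auto

lemma in_T_Cl: "0 \<in> A \<Longrightarrow> in_T n A C \<Longrightarrow> in_T n A (Cl h C)"
  unfolding in_T_def Cl_def by auto

lemma in_T_UNIV: "in_T n A C \<Longrightarrow> in_T n UNIV C"
  unfolding in_T_def by auto

lemma trunc_r:
  assumes T: "in_T n S C" and h: "1 \<le> h" "h \<le> j" "j \<le> n" and h': "1 \<le> h'"
  shows "poly_mat n g (Cr h C) h' j = (if h \<le> h' then poly_mat n g C h' j else 0)"
proof -
  have TU: "in_T n UNIV C" using T by (rule in_T_UNIV)
  have TR: "in_T n UNIV (Cr h C)" by (rule in_T_Cr[OF _ TU]) simp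
  show ?thesis
  proof (cases "h \<le> h'")
    case True
    have "poly_mat n g (Cr h C) h' j = pair_path g h' j (\<lambda>(x,y). Cr h C x y)"
      using poly_mat_path[OF TR] h h' by simp
    also have "\<dots> = pair_path g h' j (\<lambda>(x,y). C x y)"
      unfolding pair_path_def using True
      by (intro sum.cong refl arg_cong2[where f="(*)"] path_val_cong) (auto simp: Cr_def)
    also have "\<dots> = poly_mat n g C h' j" using poly_mat_path[OF TU] h h' by simp
    finally show ?thesis using True by simp
  next
    case False
    have "\<And>k. mat_pow n (Cr h C) k h' j = 0"
    proof -
      fix k show "mat_pow n (Cr h C) k h' j = 0"
      proof (cases k)
        case 0 then show ?thesis using False h by (simp add: mat_one_def)
      next
        case (Suc k')
        show ?thesis unfolding Suc mat_pow_Suc'[OF in_T_out2[OF TR]] mat_mult_def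
          using False by (simp add: Cr_def)
      qed
    qed
    then show ?thesis using False unfolding poly_mat_def by simp
  qed
qed

lemma trunc_l:
  assumes T: "in_T n S C" and h: "1 \<le> i" "i \<le> h" and h': "h' \<le> n"
  shows "poly_mat n g (Cl h C) i h' = (if h' \<le> h then poly_mat n g C i h' else 0)"
proof -
  have TU: "in_T n UNIV C" using T by (rule in_T_UNIV)
  have TR: "in_T n UNIV (Cl h C)" by (rule in_T_Cl[OF _ TU]) simp
  show ?thesis
  proof (cases "h' \<le> h")
    case True
    have "poly_mat n g (Cl h C) i h' = pair_path g i h' (\<lambda>(x,y). Cl h C x y)"
      using poly_mat_path[OF TR] h h' by simp
    also have "\<dots> = pair_path g i h' (\<lambda>(x,y). C x y)"
      unfolding pair_path_def using True
      by (intro sum.cong refl arg_cong2[where f="(*)"] path_val_cong) (auto simp: Cl_def)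
    also have "\<dots> = poly_mat n g C i h'" using poly_mat_path[OF TU] h h' by simp
    finally show ?thesis using True by simp
  next
    case False
    have "\<And>k. mat_pow n (Cl h C) k i h' = 0"
    proof -
      fix k show "mat_pow n (Cl h C) k i h' = 0"
      proof (cases k)
        case 0 then show ?thesis using False h by (simp add: mat_one_def)
      next
        case (Suc k')
        show ?thesis unfolding Suc mat_pow.simps mat_mult_def
          using False by (simp add: Cl_def)
      qed
    qed
    then show ?thesis using False unfolding poly_mat_def by simp
  qed
qed

lemma ideal_facts:
  assumes "is_ideal_of I S"
  shows "0 \<in> I" "\<And>a b. a \<in> I \<Longrightarrow> b \<in> I \<Longrightarrow> a - b \<in> I" "\<And>a b. a \<in> I \<Longrightarrow> b \<in> I \<Longrightarrow> a + b \<in> I"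
  using assms unfolding is_ideal_of_def by auto

lemma right_12:
  assumes S: "is_subring S" and I: "is_ideal_of I S" and F: "is_Tpoly n f" and i: "1 \<le> i" "i \<le> n"
  shows "(\<forall>C. in_T n S C \<longrightarrow> (\<forall>j\<in>{1..n}. right_eval n f C i j \<in> I))
        \<longleftrightarrow> (\<forall>C. in_T n S C \<longrightarrow> (\<forall>h j. i \<le> h \<and> h \<le> j \<and> j \<le> n \<longrightarrow> poly_mat n (f i h) C h j \<in> I))"
proof
  assume H: "\<forall>C. in_T n S C \<longrightarrow> (\<forall>h j. i \<le> h \<and> h \<le> j \<and> j \<le> n \<longrightarrow> poly_mat n (f i h) C h j \<in> I)"
  show "\<forall>C. in_T n S C \<longrightarrow> (\<forall>j\<in>{1..n}. right_eval n f C i j \<in> I)"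
  proof (intro allI impI ballI)
    fix C j assume T: "in_T n S C" and j: "j \<in> {1..n}"
    have "(\<Sum>h\<in>{1..n}. poly_mat n (f i h) C h j) \<in> I"
    proof (rule sum_in_I[OF I], simp, rule ballI)
      fix h assume h: "h \<in> {1..n}"
      show "poly_mat n (f i h) C h j \<in> I"
      proof (cases "i \<le> h")
        case False
        then have "f i h = 0" using F unfolding is_Tpoly_def by auto
        then show ?thesis using ideal_facts[OF I] by simp
      next
        case True
        show ?thesis
        proof (cases "h \<le> j")
          case True then show ?thesis using H T \<open>i \<le> h\<close> j by auto
        next
          case False then show ?thesis using poly_mat_out[OF T] ideal_facts[OF I] by simp
        qed
      qed
    qed
    then show "right_eval n f C i j \<in> I" using RE[OF F] by simp
  qed
next
  assume H: "\<forall>C. in_T n S C \<longrightarrow> (\<forall>j\<in>{1..n}. right_eval n f C i j \<in> I)"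
  show "\<forall>C. in_T n S C \<longrightarrow> (\<forall>h j. i \<le> h \<and> h \<le> j \<and> j \<le> n \<longrightarrow> poly_mat n (f i h) C h j \<in> I)"
  proof (intro allI impI)
    fix C h j assume T: "in_T n S C" and hj: "i \<le> h \<and> h \<le> j \<and> j \<le> n"
    define Tm where "Tm = (\<lambda>h'. poly_mat n (f i h') C h' j)"
    have key: "(\<Sum>h'\<in>{h0..n}. Tm h') \<in> I" if h0: "1 \<le> h0" "h0 \<le> j" for h0
    proof -
      have T0: "in_T n S (Cr h0 C)" using in_T_Cr[OF _ T] S unfolding is_subring_def by auto
      have "right_eval n f (Cr h0 C) i j \<in> I" using H T0 h0 hj by auto
      also have "right_eval n f (Cr h0 C) i j = (\<Sum>h'\<in>{1..n}. if h0 \<le> h' then Tm h' else 0)"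
        unfolding RE[OF F] Tm_def using h0 hj by (intro sum.cong refl trunc_r[OF T]) auto
      also have "\<dots> = (\<Sum>h'\<in>{h'\<in>{1..n}. h0 \<le> h'}. Tm h')" by (simp only: sum.inter_filter[OF finite_atLeastAtMost])
      also have "{h'\<in>{1..n}. h0 \<le> h'} = {h0..n}" using h0 by auto
      finally show ?thesis .
    qed
    have "(\<Sum>h'\<in>{h..n}. Tm h') = Tm h + (\<Sum>h'\<in>{Suc h..n}. Tm h')"
      using hj by (intro sum.atLeast_Suc_atMost) auto
    moreover have "(\<Sum>h'\<in>{Suc h..n}. Tm h') \<in> I"
    proof (cases "Suc h \<le> j")
      case True then show ?thesis using key by simp
    next
      case False
      have "(\<Sum>h'\<in>{Suc h..n}. Tm h') = 0"
        using False poly_mat_out[OF T] unfolding Tm_def by (intro sum.neutral) auto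
      then show ?thesis using ideal_facts[OF I] by simp
    qed
    moreover have "(\<Sum>h'\<in>{h..n}. Tm h') \<in> I" using key i hj by auto
    ultimately have "Tm h \<in> I" using ideal_facts(2)[OF I] by (metis add_diff_cancel_right')
    then show "poly_mat n (f i h) C h j \<in> I" unfolding Tm_def by simp
  qed
qed

lemma left_12:
  assumes S: "is_subring S" and I: "is_ideal_of I S" and F: "is_Tpoly n f" and j: "1 \<le> j" "j \<le> n"
  shows "(\<forall>C. in_T n S C \<longrightarrow> (\<forall>i\<in>{1..n}. left_eval n f C i j \<in> I))
        \<longleftrightarrow> (\<forall>C. in_T n S C \<longrightarrow> (\<forall>i h. 1 \<le> i \<and> i \<le> h \<and> h \<le> j \<longrightarrow> poly_mat n (f h j) C i h \<in> I))"
proof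
  assume H: "\<forall>C. in_T n S C \<longrightarrow> (\<forall>i h. 1 \<le> i \<and> i \<le> h \<and> h \<le> j \<longrightarrow> poly_mat n (f h j) C i h \<in> I)"
  show "\<forall>C. in_T n S C \<longrightarrow> (\<forall>i\<in>{1..n}. left_eval n f C i j \<in> I)"
  proof (intro allI impI ballI)
    fix C i assume T: "in_T n S C" and i: "i \<in> {1..n}"
    have "(\<Sum>h\<in>{1..n}. poly_mat n (f h j) C i h) \<in> I"
    proof (rule sum_in_I[OF I], simp, rule ballI)
      fix h assume h: "h \<in> {1..n}"
      show "poly_mat n (f h j) C i h \<in> I"
      proof (cases "h \<le> j")
        case False
        then have "f h j = 0" using F unfolding is_Tpoly_def by auto
        then show ?thesis using ideal_facts[OF I] by simp
      next
        case True
        show ?thesis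
        proof (cases "i \<le> h")
          case True then show ?thesis using H T \<open>h \<le> j\<close> i by auto
        next
          case False then show ?thesis using poly_mat_out[OF T] ideal_facts[OF I] by simp
        qed
      qed
    qed
    then show "left_eval n f C i j \<in> I" using LE[OF F] by simp
  qed
next
  assume H: "\<forall>C. in_T n S C \<longrightarrow> (\<forall>i\<in>{1..n}. left_eval n f C i j \<in> I)"
  show "\<forall>C. in_T n S C \<longrightarrow> (\<forall>i h. 1 \<le> i \<and> i \<le> h \<and> h \<le> j \<longrightarrow> poly_mat n (f h j) C i h \<in> I)"
  proof (intro allI impI)
    fix C i h assume T: "in_T n S C" and hj: "1 \<le> i \<and> i \<le> h \<and> h \<le> j"
    define U where "U = (\<lambda>h'. poly_mat n (f h' j) C i h')"
    have key: "(\<Sum>h'\<in>{1..h0}. U h') \<in> I" if h0: "i \<le> h0" "h0 \<le> n" for h0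
    proof -
      have T0: "in_T n S (Cl h0 C)" using in_T_Cl[OF _ T] S unfolding is_subring_def by auto
      have "left_eval n f (Cl h0 C) i j \<in> I" using H T0 h0 hj by auto
      also have "left_eval n f (Cl h0 C) i j = (\<Sum>h'\<in>{1..n}. if h' \<le> h0 then U h' else 0)"
        unfolding LE[OF F] U_def using h0 hj by (intro sum.cong refl trunc_l[OF T]) auto
      also have "\<dots> = (\<Sum>h'\<in>{h'\<in>{1..n}. h' \<le> h0}. U h')" by (simp only: sum.inter_filter[OF finite_atLeastAtMost])
      also have "{h'\<in>{1..n}. h' \<le> h0} = {1..h0}" using h0 by auto
      finally show ?thesis .
    qed
    obtain h1 where h1: "h = Suc h1" using hj by (cases h) auto
    have "(\<Sum>h'\<in>{1..h}. U h') = (\<Sum>h'\<in>{1..h1}. U h') + U h"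
      unfolding h1 by (simp add: sum.cl_ivl_Suc)
    moreover have "(\<Sum>h'\<in>{1..h1}. U h') \<in> I"
    proof (cases "i \<le> h1")
      case True then show ?thesis using key hj j h1 by simp
    next
      case False
      have "(\<Sum>h'\<in>{1..h1}. U h') = 0"
        using False poly_mat_out[OF T] unfolding U_def by (intro sum.neutral) auto
      then show ?thesis using ideal_facts[OF I] by simp
    qed
    moreover have "(\<Sum>h'\<in>{1..h}. U h') \<in> I" using key j hj by auto
    ultimately have "U h \<in> I" using ideal_facts(2)[OF I] by (metis add_diff_cancel_left')
    then show "poly_mat n (f h j) C i h \<in> I" unfolding U_def by simp
  qed
qed

lemma right_23:
  assumes S: "is_subring S" and I: "is_ideal_of I S" and i: "1 \<le> i"
  shows "(\<forall>C. in_T n S C \<longrightarrow> (\<forall>h j. i \<le> h \<and> h \<le> j \<and> j \<le> n \<longrightarrow> poly_mat n (f i h) C h j \<in> I))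
        \<longleftrightarrow> (\<forall>h j. i \<le> h \<and> h \<le> j \<and> j \<le> n \<longrightarrow> Int_star S I (pair_path (f i h) h j))"
proof -
  have "(\<forall>C. in_T n S C \<longrightarrow> (\<forall>h j. i \<le> h \<and> h \<le> j \<and> j \<le> n \<longrightarrow> poly_mat n (f i h) C h j \<in> I))
    \<longleftrightarrow> (\<forall>h j. i \<le> h \<and> h \<le> j \<and> j \<le> n \<longrightarrow> (\<forall>C. in_T n S C \<longrightarrow> poly_mat n (f i h) C h j \<in> I))" by blast
  also have "\<dots> \<longleftrightarrow> (\<forall>h j. i \<le> h \<and> h \<le> j \<and> j \<le> n \<longrightarrow> Int_star S I (pair_path (f i h) h j))"
  proof (intro iff_allI imp_cong refl)
    fix h j assume "i \<le> h \<and> h \<le> j \<and> j \<le> n"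
    then show "(\<forall>C. in_T n S C \<longrightarrow> poly_mat n (f i h) C h j \<in> I) \<longleftrightarrow> Int_star S I (pair_path (f i h) h j)"
      using gen_iff[OF S I] i by simp
  qed
  finally show ?thesis .
qed

lemma left_23:
  assumes S: "is_subring S" and I: "is_ideal_of I S" and j: "j \<le> n"
  shows "(\<forall>C. in_T n S C \<longrightarrow> (\<forall>i h. 1 \<le> i \<and> i \<le> h \<and> h \<le> j \<longrightarrow> poly_mat n (f h j) C i h \<in> I))
        \<longleftrightarrow> (\<forall>i h. 1 \<le> i \<and> i \<le> h \<and> h \<le> j \<longrightarrow> Int_star S I (pair_path (f h j) i h))"
proof -
  have "(\<forall>C. in_T n S C \<longrightarrow> (\<forall>i h. 1 \<le> i \<and> i \<le> h \<and> h \<le> j \<longrightarrow> poly_mat n (f h j) C i h \<in> I))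
    \<longleftrightarrow> (\<forall>i h. 1 \<le> i \<and> i \<le> h \<and> h \<le> j \<longrightarrow> (\<forall>C. in_T n S C \<longrightarrow> poly_mat n (f h j) C i h \<in> I))" by blast
  also have "\<dots> \<longleftrightarrow> (\<forall>i h. 1 \<le> i \<and> i \<le> h \<and> h \<le> j \<longrightarrow> Int_star S I (pair_path (f h j) i h))"
  proof (intro iff_allI imp_cong refl)
    fix i h assume "1 \<le> i \<and> i \<le> h \<and> h \<le> j"
    then show "(\<forall>C. in_T n S C \<longrightarrow> poly_mat n (f h j) C i h \<in> I) \<longleftrightarrow> Int_star S I (pair_path (f h j) i h)"
      using gen_iff[OF S I] j by simp
  qed
  finally show ?thesis .
qed

lemma shift0: "Int_star S I (pair_path g a b) \<longleftrightarrow> Int_star S I (pair_path g 0 (b - a))" if "a \<le> b"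
proof -
  have "Int_star S I (pair_path g 0 (b - a)) \<longleftrightarrow> Int_star S I (pair_path g (0 + a) ((b - a) + a))"
    by (rule shift_iff)
  then show ?thesis using that by simp
qed

lemma right_shift:
  assumes h: "1 \<le> h" "h \<le> n"
  shows "(\<forall>j. h \<le> j \<and> j \<le> n \<longrightarrow> Int_star S I (pair_path g h j)) \<longleftrightarrow>
         (\<forall>a b. 1 \<le> a \<and> a \<le> b \<and> b \<le> n - h + 1 \<longrightarrow> Int_star S I (pair_path g a b))"
proof
  assume H: "\<forall>j. h \<le> j \<and> j \<le> n \<longrightarrow> Int_star S I (pair_path g h j)"
  show "\<forall>a b. 1 \<le> a \<and> a \<le> b \<and> b \<le> n - h + 1 \<longrightarrow> Int_star S I (pair_path g a b)"
  proof (intro allI impI)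
    fix a b assume ab: "1 \<le> a \<and> a \<le> b \<and> b \<le> n - h + 1"
    have "h \<le> b - a + h \<and> b - a + h \<le> n" using ab h by auto
    then have "Int_star S I (pair_path g h (b - a + h))" using H by blast
    then have "Int_star S I (pair_path g 0 (b - a))" using shift0[of h "b - a + h" S I g] by simp
    then show "Int_star S I (pair_path g a b)" using shift0[of a b S I g] ab by simp
  qed
next
  assume H: "\<forall>a b. 1 \<le> a \<and> a \<le> b \<and> b \<le> n - h + 1 \<longrightarrow> Int_star S I (pair_path g a b)"
  show "\<forall>j. h \<le> j \<and> j \<le> n \<longrightarrow> Int_star S I (pair_path g h j)"
  proof (intro allI impI)
    fix j assume hj: "h \<le> j \<and> j \<le> n"
    have "Int_star S I (pair_path g 1 (j - h + 1))" using H hj h by auto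
    then have "Int_star S I (pair_path g 0 (j - h))" using shift0[of 1 "j - h + 1" S I g] by simp
    then show "Int_star S I (pair_path g h j)" using shift0[of h j S I g] hj by simp
  qed
qed

lemma left_shift:
  assumes h: "1 \<le> h"
  shows "(\<forall>i. 1 \<le> i \<and> i \<le> h \<longrightarrow> Int_star S I (pair_path g i h)) \<longleftrightarrow>
         (\<forall>a b. 1 \<le> a \<and> a \<le> b \<and> b \<le> h \<longrightarrow> Int_star S I (pair_path g a b))"
proof
  assume H: "\<forall>i. 1 \<le> i \<and> i \<le> h \<longrightarrow> Int_star S I (pair_path g i h)"
  show "\<forall>a b. 1 \<le> a \<and> a \<le> b \<and> b \<le> h \<longrightarrow> Int_star S I (pair_path g a b)"
  proof (intro allI impI)
    fix a b assume ab: "1 \<le> a \<and> a \<le> b \<and> b \<le> h"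
    have "1 \<le> h - (b - a) \<and> h - (b - a) \<le> h" using ab h by auto
    then have "Int_star S I (pair_path g (h - (b - a)) h)" using H by blast
    then have "Int_star S I (pair_path g 0 (b - a))" using shift0[of "h - (b - a)" h S I g, OF diff_le_self] ab by simp
    then show "Int_star S I (pair_path g a b)" using shift0[of a b S I g] ab by simp
  qed
qed auto

lemma right_34:
  assumes S: "is_subring S" and I: "is_ideal_of I S" and i: "1 \<le> i"
  shows "(\<forall>h j. i \<le> h \<and> h \<le> j \<and> j \<le> n \<longrightarrow> Int_star S I (pair_path (f i h) h j))
        \<longleftrightarrow> (\<forall>h\<in>{i..n}. f i h \<in> Int_T (n - h + 1) S I)"
proof -
  have "(\<forall>h j. i \<le> h \<and> h \<le> j \<and> j \<le> n \<longrightarrow> Int_star S I (pair_path (f i h) h j))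
      \<longleftrightarrow> (\<forall>h\<in>{i..n}. (\<forall>j. h \<le> j \<and> j \<le> n \<longrightarrow> Int_star S I (pair_path (f i h) h j)))" by auto
  also have "\<dots> \<longleftrightarrow> (\<forall>h\<in>{i..n}. f i h \<in> Int_T (n - h + 1) S I)"
  proof (rule ball_cong[OF refl])
    fix h assume "h \<in> {i..n}"
    then show "(\<forall>j. h \<le> j \<and> j \<le> n \<longrightarrow> Int_star S I (pair_path (f i h) h j)) \<longleftrightarrow> f i h \<in> Int_T (n - h + 1) S I"
      using right_shift[of h n S I "f i h"] Int_T_iff[OF S I] i by simp
  qed
  finally show ?thesis .
qed

lemma left_34:
  assumes S: "is_subring S" and I: "is_ideal_of I S"
  shows "(\<forall>i h. 1 \<le> i \<and> i \<le> h \<and> h \<le> j \<longrightarrow> Int_star S I (pair_path (f h j) i h))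
        \<longleftrightarrow> (\<forall>h\<in>{1..j}. f h j \<in> Int_T h S I)"
proof -
  have "(\<forall>i h. 1 \<le> i \<and> i \<le> h \<and> h \<le> j \<longrightarrow> Int_star S I (pair_path (f h j) i h))
      \<longleftrightarrow> (\<forall>h\<in>{1..j}. (\<forall>i. 1 \<le> i \<and> i \<le> h \<longrightarrow> Int_star S I (pair_path (f h j) i h)))" by auto
  also have "\<dots> \<longleftrightarrow> (\<forall>h\<in>{1..j}. f h j \<in> Int_T h S I)"
  proof (rule ball_cong[OF refl])
    fix h assume "h \<in> {1..j}"
    then show "(\<forall>i. 1 \<le> i \<and> i \<le> h \<longrightarrow> Int_star S I (pair_path (f h j) i h)) \<longleftrightarrow> f h j \<in> Int_T h S I"
      using left_shift[of h S I "f h j"] Int_T_iff[OF S I] by simp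
  qed
  finally show ?thesis .
qed

theorem lemma4p1:
  fixes S I :: "'a::comm_ring_1 set" and n :: nat and f :: "nat \<Rightarrow> nat \<Rightarrow> 'a poly"
  assumes "is_subring S" and "is_ideal_of I S" and "n \<ge> 1" and "is_Tpoly n f"
  shows "(\<forall>i\<in>{1..n}.
      ((\<forall>C. in_T n S C \<longrightarrow> (\<forall>j\<in>{1..n}. right_eval n f C i j \<in> I))
        \<longleftrightarrow> (\<forall>C. in_T n S C \<longrightarrow> (\<forall>h j. i \<le> h \<and> h \<le> j \<and> j \<le> n \<longrightarrow> poly_mat n (f i h) C h j \<in> I))) \<and>
      ((\<forall>C. in_T n S C \<longrightarrow> (\<forall>h j. i \<le> h \<and> h \<le> j \<and> j \<le> n \<longrightarrow> poly_mat n (f i h) C h j \<in> I))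
        \<longleftrightarrow> (\<forall>h j. i \<le> h \<and> h \<le> j \<and> j \<le> n \<longrightarrow> Int_star S I (pair_path (f i h) h j))) \<and>
      ((\<forall>h j. i \<le> h \<and> h \<le> j \<and> j \<le> n \<longrightarrow> Int_star S I (pair_path (f i h) h j))
        \<longleftrightarrow> (\<forall>h\<in>{i..n}. f i h \<in> Int_T (n - h + 1) S I)))
   \<and> (\<forall>j\<in>{1..n}.
      ((\<forall>C. in_T n S C \<longrightarrow> (\<forall>i\<in>{1..n}. left_eval n f C i j \<in> I))
        \<longleftrightarrow> (\<forall>C. in_T n S C \<longrightarrow> (\<forall>i h. 1 \<le> i \<and> i \<le> h \<and> h \<le> j \<longrightarrow> poly_mat n (f h j) C i h \<in> I))) \<and>
      ((\<forall>C. in_T n S C \<longrightarrow> (\<forall>i h. 1 \<le> i \<and> i \<le> h \<and> h \<le> j \<longrightarrow> poly_mat n (f h j) C i h \<in> I))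
        \<longleftrightarrow> (\<forall>i h. 1 \<le> i \<and> i \<le> h \<and> h \<le> j \<longrightarrow> Int_star S I (pair_path (f h j) i h))) \<and>
      ((\<forall>i h. 1 \<le> i \<and> i \<le> h \<and> h \<le> j \<longrightarrow> Int_star S I (pair_path (f h j) i h))
        \<longleftrightarrow> (\<forall>h\<in>{1..j}. f h j \<in> Int_T h S I)))"
  proof -
  have Sr: "is_subring S" and Ir: "is_ideal_of I S" and F: "is_Tpoly n f" using assms by auto
  show ?thesis
  proof (intro conjI ballI)
    fix i assume i: "i \<in> {1..n}"
    show "(\<forall>C. in_T n S C \<longrightarrow> (\<forall>j\<in>{1..n}. right_eval n f C i j \<in> I))
        \<longleftrightarrow> (\<forall>C. in_T n S C \<longrightarrow> (\<forall>h j. i \<le> h \<and> h \<le> j \<and> j \<le> n \<longrightarrow> poly_mat n (f i h) C h j \<in> I))"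
      using right_12[OF Sr Ir F] i by simp
    show "(\<forall>C. in_T n S C \<longrightarrow> (\<forall>h j. i \<le> h \<and> h \<le> j \<and> j \<le> n \<longrightarrow> poly_mat n (f i h) C h j \<in> I))
        \<longleftrightarrow> (\<forall>h j. i \<le> h \<and> h \<le> j \<and> j \<le> n \<longrightarrow> Int_star S I (pair_path (f i h) h j))"
      using right_23[OF Sr Ir] i by simp
    show "(\<forall>h j. i \<le> h \<and> h \<le> j \<and> j \<le> n \<longrightarrow> Int_star S I (pair_path (f i h) h j))
        \<longleftrightarrow> (\<forall>h\<in>{i..n}. f i h \<in> Int_T (n - h + 1) S I)"
      using right_34[OF Sr Ir] i by simp
  next
    fix j assume j: "j \<in> {1..n}"
    show "(\<forall>C. in_T n S C \<longrightarrow> (\<forall>i\<in>{1..n}. left_eval n f C i j \<in> I))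
        \<longleftrightarrow> (\<forall>C. in_T n S C \<longrightarrow> (\<forall>i h. 1 \<le> i \<and> i \<le> h \<and> h \<le> j \<longrightarrow> poly_mat n (f h j) C i h \<in> I))"
      using left_12[OF Sr Ir F] j by simp
    show "(\<forall>C. in_T n S C \<longrightarrow> (\<forall>i h. 1 \<le> i \<and> i \<le> h \<and> h \<le> j \<longrightarrow> poly_mat n (f h j) C i h \<in> I))
        \<longleftrightarrow> (\<forall>i h. 1 \<le> i \<and> i \<le> h \<and> h \<le> j \<longrightarrow> Int_star S I (pair_path (f h j) i h))"
      using left_23[OF Sr Ir] j by simp
    show "(\<forall>i h. 1 \<le> i \<and> i \<le> h \<and> h \<le> j \<longrightarrow> Int_star S I (pair_path (f h j) i h))
        \<longleftrightarrow> (\<forall>h\<in>{1..j}. f h j \<in> Int_T h S I)"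
      using left_34[OF Sr Ir] by simp
  qed
qed

end
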